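(* Let $\mathbb{X}$ be a finite dimensional real Banach space and $T,A\in\mathbb{B}(\mathbb{X})$. Then $T\perp_B A$ if and only if there exist $x,y\in M_T$ such that $Ax\in(Tx)^+$ and $Ay\in(Ty)^-$.
   Context: $\mathbb{B}(\mathbb{X})$ is the space of bounded linear operators on $\mathbb{X}$ with the operator norm. $S_{\mathbb{X}}$ is the unit sphere and $M_T=\{x\in S_{\mathbb{X}}:\|Tx\|=\|T\|\}$. For elements $u,v$ of a normed space, $u\perp_B v$ (Birkhoff–James orthogonality) means $\|u+\lambda v\|\ge\|u\|$ for all $\lambda\in\mathbb{R}$; $v\in u^+$ means $\|u+\lambda v\|\ge\|u\|$ for all $\lambda\ge0$; $v\in u^-$ means $\|u+\lambda v\|\ge\|u\|$ for all $\lambda\le 0$. *)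

theory Defs
  imports "HOL-Analysis.Analysis"
begin

definition bj_orth :: "'b::real_normed_vector \<Rightarrow> 'b \<Rightarrow> bool" where
  "bj_orth u v \<longleftrightarrow> (\<forall>t::real. norm (u + t *\<^sub>R v) \<ge> norm u)"

definition bj_plus :: "'b::real_normed_vector \<Rightarrow> 'b set" where
  "bj_plus u = {v. \<forall>t::real. t \<ge> 0 \<longrightarrow> norm (u + t *\<^sub>R v) \<ge> norm u}"

definition bj_minus :: "'b::real_normed_vector \<Rightarrow> 'b set" where
  "bj_minus u = {v. \<forall>t::real. t \<le> 0 \<longrightarrow> norm (u + t *\<^sub>R v) \<ge> norm u}"

definition norm_attain :: "('a::real_normed_vector \<Rightarrow>\<^sub>L 'a) \<Rightarrow> 'a set" where
  "norm_attain T = {x. norm x = 1 \<and> norm (blinfun_apply T x) = norm T}"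

end

theory Submission imports Defs begin

lemma fd_compact_sphere:
  assumes "\<exists>B. finite B \<and> span B = (UNIV::'a::real_normed_vector set)"
  shows "compact (sphere (0::'a) 1)"
proof -
  obtain B0 :: "'a set" where fB0: "finite B0" and sB0: "span B0 = UNIV" using assms by blast
  obtain B where BB0: "B \<subseteq> B0" and indB: "independent B" and B0B: "B0 \<subseteq> span B"
    by (rule maximal_independent_subset)
  have fB: "finite B" using BB0 fB0 finite_subset by blast
  have spB: "span B = UNIV" using B0B sB0 by (metis span_eq top.extremum_unique span_mono span_span)
  define f :: "('a \<Rightarrow> real) \<Rightarrow> 'a" where "f u = (\<Sum>v\<in>B. u v *\<^sub>R v)" for u
  define D where "D R = {u::'a\<Rightarrow>real. \<forall>v. u v \<in> (if v\<in>B then {-R..R} else {0})}" for R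
  have cD: "compact (D R)" for R
  proof -
    have "compactin (product_topology (\<lambda>i. euclidean) UNIV)
            (PiE UNIV (\<lambda>v::'a. if v\<in>B then {-R..R} else {0::real}))"
      by (subst compactin_PiE) auto
    moreover have "PiE UNIV (\<lambda>v::'a. if v\<in>B then {-R..R} else {0::real}) = D R"
      by (simp add: D_def PiE_UNIV_domain Pi_def)
    ultimately show ?thesis by (simp add: euclidean_product_topology)
  qed
  have contf: "continuous_on UNIV f"
    unfolding f_def by (intro continuous_intros) auto
  define g where "g u = (\<Sum>v\<in>B. \<bar>u v\<bar>)" for u :: "'a \<Rightarrow> real"
  have contg: "continuous_on UNIV g"
    unfolding g_def by (intro continuous_intros) auto
  define Z where "Z = D 1 \<inter> {u. g u = 1}"
  have cZ: "compact Z"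
    unfolding Z_def by (intro compact_Int_closed cD closed_Collect_eq contg) auto
  have fpos: "f u \<noteq> 0" if "u \<in> Z" for u
  proof
    assume f0: "f u = 0"
    have "\<exists>v\<in>B. u v \<noteq> 0"
    proof (rule ccontr)
      assume "\<not> ?thesis"
      then have "g u = 0" by (simp add: g_def)
      then show False using that by (simp add: Z_def)
    qed
    then have "dependent B" using f0 fB by (auto simp: dependent_finite f_def)
    then show False using indB by simp
  qed
  obtain m where m0: "m > 0" and mZ: "\<And>u. u \<in> Z \<Longrightarrow> m \<le> norm (f u)"
  proof (cases "Z = {}")
    case True then show ?thesis using that[of 1] by auto
  next
    case False
    obtain u0 where u0: "u0 \<in> Z" "\<And>u. u \<in> Z \<Longrightarrow> norm (f u0) \<le> norm (f u)"
      using continuous_attains_inf[OF cZ False, of "\<lambda>u. norm (f u)"]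
        continuous_on_subset[OF contf] by (metis continuous_on_norm subset_UNIV)
    show ?thesis using that[of "norm (f u0)"] u0 fpos by auto
  qed
  have sub: "sphere 0 1 \<subseteq> f ` D (1/m)"
  proof
    fix x :: 'a assume x: "x \<in> sphere 0 1"
    have "x \<in> span B" using spB by simp
    then obtain u where u: "x = (\<Sum>v\<in>B. u v *\<^sub>R v)" using span_finite[OF fB] by auto
    define u' where "u' v = (if v \<in> B then u v else 0)" for v
    have fu': "f u' = x" unfolding f_def u'_def u by (rule sum.cong) auto
    define s where "s = g u'"
    have s0: "s \<ge> 0" unfolding s_def g_def by (simp add: sum_nonneg)
    have "s \<noteq> 0"
    proof
      assume "s = 0"
      then have "\<forall>v\<in>B. u' v = 0" using fB unfolding s_def g_def by (simp add: sum_nonneg_eq_0_iff)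
      then have "f u' = 0" by (simp add: f_def)
      then show False using fu' x by simp
    qed
    with s0 have sp: "s > 0" by simp
    define w where "w v = u' v / s" for v
    have "g w = 1" using sp unfolding g_def w_def s_def
      by (simp add: abs_div sum_divide_distrib[symmetric])
    moreover have "\<bar>u' v\<bar> \<le> s" if "v \<in> B" for v
      unfolding s_def g_def using member_le_sum[OF that, of "\<lambda>v. \<bar>u' v\<bar>"] fB by simp
    ultimately have "w \<in> Z" using sp unfolding Z_def D_def w_def
      by (auto simp: u'_def abs_le_iff divide_le_eq_1 field_simps) (metis minus_le_iff)
    then have "m \<le> norm (f w)" by (rule mZ)
    moreover have "f w = (1/s) *\<^sub>R x"
      unfolding f_def w_def fu'[symmetric] by (simp add: scaleR_sum_right divide_inverse_commute)
    ultimately have "m \<le> 1 / s" using x sp by simp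
    then have "s \<le> 1 / m" using m0 sp by (simp add: field_simps)
    then have "u' \<in> D (1/m)"
      using \<open>\<And>v. v \<in> B \<Longrightarrow> \<bar>u' v\<bar> \<le> s\<close> unfolding D_def
      by (auto simp: u'_def abs_le_iff) (smt (verit) u'_def)+
    then show "x \<in> f ` D (1/m)" using fu' by blast
  qed
  have cs: "closed (sphere (0::'a) 1)"
  proof -
    have "closed {x::'a. norm x = 1}" by (intro closed_Collect_eq continuous_intros)
    moreover have "sphere (0::'a) 1 = {x. norm x = 1}" by auto
    ultimately show ?thesis by simp
  qed
  have "compact (f ` D (1/m))"
    by (rule compact_continuous_image[OF continuous_on_subset[OF contf] cD]) simp
  then have "compact (f ` D (1/m) \<inter> sphere 0 1)" by (rule compact_Int_closed[OF _ cs])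
  moreover have "f ` D (1/m) \<inter> sphere 0 1 = sphere 0 1" using sub by blast
  ultimately show ?thesis by simp
qed

lemma conv_step:
  fixes u v :: "'a::real_normed_vector"
  assumes "norm u \<le> N" "N \<le> norm (u + l *\<^sub>R v)" "0 < l" "l \<le> \<mu>"
  shows "N \<le> norm (u + \<mu> *\<^sub>R v)"
proof -
  define s where "s = l / \<mu>"
  have mu: "\<mu> > 0" using assms by simp
  have s0: "0 < s" "s \<le> 1" using assms mu by (auto simp: s_def)
  have eq: "u + l *\<^sub>R v = (1 - s) *\<^sub>R u + s *\<^sub>R (u + \<mu> *\<^sub>R v)"
    using mu by (simp add: s_def algebra_simps)
  have "norm (u + l *\<^sub>R v) \<le> (1 - s) * norm u + s * norm (u + \<mu> *\<^sub>R v)"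
    unfolding eq using s0
    by (metis (no_types, lifting) abs_of_nonneg diff_ge_0_iff_ge less_imp_le norm_scaleR norm_triangle_ineq)
  also have "\<dots> \<le> (1 - s) * N + s * norm (u + \<mu> *\<^sub>R v)"
    using assms(1) s0 by (simp add: mult_left_mono)
  finally have "s * N \<le> s * norm (u + \<mu> *\<^sub>R v)" using assms(2) by (simp add: algebra_simps)
  then show ?thesis using s0 by simp
qed

lemma attain:
  fixes F :: "'a::real_normed_vector \<Rightarrow>\<^sub>L 'b::real_normed_vector"
  assumes cs: "compact (sphere (0::'a) 1)" and nt: "(UNIV :: 'a set) \<noteq> {0}"
  shows "\<exists>x. norm x = 1 \<and> norm (blinfun_apply F x) = norm F"
proof -
  obtain z :: 'a where "z \<noteq> 0" using nt by auto
  then have ne: "sphere (0::'a) 1 \<noteq> {}"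
    by (metis empty_iff mem_sphere_0 norm_sgn)
  have "continuous_on (sphere 0 1) (\<lambda>x. norm (blinfun_apply F x))"
    by (intro continuous_intros)
  then obtain x0 where x0: "x0 \<in> sphere 0 1" "\<And>y. y \<in> sphere 0 1 \<Longrightarrow> norm (F y) \<le> norm (F x0)"
    using continuous_attains_sup[OF cs ne] by blast
  have "norm F \<le> norm (F x0)"
  proof (rule norm_blinfun_bound)
    show "0 \<le> norm (F x0)" by simp
    fix y :: 'a
    show "norm (F y) \<le> norm (F x0) * norm y"
    proof (cases "y = 0")
      case False
      have "norm (F (sgn y)) \<le> norm (F x0)" using x0(2)[of "sgn y"] False by (simp add: norm_sgn)
      moreover have "F y = norm y *\<^sub>R F (sgn y)" using False
        by (simp add: sgn_div_norm blinfun.scaleR_right)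
      ultimately show ?thesis by (simp add: mult.commute mult_left_mono)
    qed simp
  qed
  moreover have "norm (F x0) \<le> norm F" using norm_blinfun[of F x0] x0(1) by simp
  ultimately show ?thesis using x0(1) by (intro exI[of _ x0]) auto
qed

lemma plus_part:
  fixes T A :: "'a::real_normed_vector \<Rightarrow>\<^sub>L 'a"
  assumes cs: "compact (sphere (0::'a) 1)" and nt: "(UNIV :: 'a set) \<noteq> {0}"
    and orth: "bj_orth T A"
  shows "\<exists>x\<in>norm_attain T. blinfun_apply A x \<in> bj_plus (blinfun_apply T x)"
proof -
  define l where "l k = 1 / real (Suc k)" for k
  have lpos: "l k > 0" for k by (simp add: l_def)
  have "\<exists>x. norm x = 1 \<and> norm T \<le> norm (T x + l k *\<^sub>R A x)" for k
  proof -
    obtain x where x: "norm x = 1" "norm ((T + l k *\<^sub>R A) x) = norm (T + l k *\<^sub>R A)"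
      using attain[OF cs nt] by blast
    have "norm T \<le> norm (T + l k *\<^sub>R A)" using orth by (simp add: bj_orth_def)
    then show ?thesis using x by (intro exI[of _ x]) (simp add: blinfun.add_left blinfun.scaleR_left)
  qed
  then obtain x where x1: "\<And>k. norm (x k) = 1" and xT: "\<And>k. norm T \<le> norm (T (x k) + l k *\<^sub>R A (x k))"
    by metis
  have "\<forall>k. x k \<in> sphere 0 1" using x1 by simp
  then obtain y r where y: "y \<in> sphere 0 1" and r: "strict_mono r" and lim: "(x \<circ> r) \<longlonglongrightarrow> y"
    using cs compact_imp_seq_compact seq_compactE by metis
  have key: "norm T \<le> norm (T y + \<mu> *\<^sub>R A y)" if mu: "\<mu> > 0" for \<mu>
  proof -
    have lim2: "(\<lambda>k. norm (T (x (r k)) + \<mu> *\<^sub>R A (x (r k)))) \<longlonglongrightarrow> norm (T y + \<mu> *\<^sub>R A y)"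
      using lim unfolding comp_def by (intro tendsto_intros)
    obtain N where N: "1 / real (Suc N) < \<mu>" using mu
      by (metis reals_Archimedean inverse_eq_divide of_nat_Suc)
    have "eventually (\<lambda>k. norm T \<le> norm (T (x (r k)) + \<mu> *\<^sub>R A (x (r k)))) sequentially"
    proof (rule eventually_sequentiallyI[of N])
      fix k assume "N \<le> k"
      then have "N \<le> r k" using r seq_suble order_trans by blast
      then have "l (r k) \<le> 1 / real (Suc N)" unfolding l_def by (simp add: frac_le)
      then have lr: "l (r k) \<le> \<mu>" using N by simp
      have "norm (T (x (r k))) \<le> norm T" using norm_blinfun[of T "x (r k)"] x1 by simp
      then show "norm T \<le> norm (T (x (r k)) + \<mu> *\<^sub>R A (x (r k)))"
        using conv_step[OF _ xT lpos lr] by blast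
    qed
    then show ?thesis using lim2 by (intro tendsto_lowerbound) auto
  qed
  have Ty: "norm (T y) = norm T"
  proof (rule ccontr)
    assume ne: "norm (T y) \<noteq> norm T"
    have "norm (T y) \<le> norm T" using norm_blinfun[of T y] y by simp
    with ne have d: "norm T - norm (T y) > 0" by simp
    define c where "c = norm (A y) + 1"
    have c0: "c > 0" unfolding c_def by (simp add: add_nonneg_pos)
    define \<mu> where "\<mu> = (norm T - norm (T y)) / (2 * c)"
    have mu: "\<mu> > 0" unfolding \<mu>_def using d c0 by simp
    have "\<mu> * norm (A y) < norm T - norm (T y)"
    proof -
      have "\<mu> * norm (A y) \<le> \<mu> * c" using mu unfolding c_def by simp
      also have "\<dots> = (norm T - norm (T y)) / 2"
        unfolding \<mu>_def using c0 by simp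
      finally show ?thesis using d by simp
    qed
    moreover have "norm T \<le> norm (T y) + \<mu> * norm (A y)"
      using key[OF mu] norm_triangle_ineq[of "T y" "\<mu> *\<^sub>R A y"] mu by simp
    ultimately show False by simp
  qed
  have "y \<in> norm_attain T" using y Ty by (simp add: norm_attain_def)
  moreover have "A y \<in> bj_plus (T y)"
    unfolding bj_plus_def
  proof (intro CollectI allI impI)
    fix t :: real assume "t \<ge> 0"
    then show "norm (T y) \<le> norm (T y + t *\<^sub>R A y)"
      using key[of t] Ty by (cases "t = 0") auto
  qed
  ultimately show ?thesis by blast
qed

theorem mainTheorem2:
  fixes T A :: "'a::banach \<Rightarrow>\<^sub>L 'a"
  assumes findim: "\<exists>B. finite B \<and> span B = (UNIV :: 'a set)"
    and nontriv: "(UNIV :: 'a set) \<noteq> {0}"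
  shows "bj_orth T A \<longleftrightarrow>
    (\<exists>x\<in>norm_attain T. \<exists>y\<in>norm_attain T.
       blinfun_apply A x \<in> bj_plus (blinfun_apply T x) \<and>
       blinfun_apply A y \<in> bj_minus (blinfun_apply T y))"
proof
  have cs: "compact (sphere (0::'a) 1)" using fd_compact_sphere[OF findim] .
  assume orth: "bj_orth T A"
  obtain x where x: "x \<in> norm_attain T" "A x \<in> bj_plus (T x)"
    using plus_part[OF cs nontriv orth] by blast
  have orth': "bj_orth T (-A)" using orth unfolding bj_orth_def
    by (metis scaleR_minus_left scaleR_minus_right)
  obtain y where y: "y \<in> norm_attain T" "(-A) y \<in> bj_plus (T y)"
    using plus_part[OF cs nontriv orth'] by blast
  have "A y \<in> bj_minus (T y)"
    unfolding bj_minus_def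
  proof (intro CollectI allI impI)
    fix t :: real assume "t \<le> 0"
    then have "- t \<ge> 0" by simp
    then have "norm (T y) \<le> norm (T y + (-t) *\<^sub>R (-A) y)"
      using y(2) unfolding bj_plus_def by blast
    then show "norm (T y) \<le> norm (T y + t *\<^sub>R A y)"
      by (simp add: blinfun.minus_left)
  qed
  then show "\<exists>x\<in>norm_attain T. \<exists>y\<in>norm_attain T.
       blinfun_apply A x \<in> bj_plus (blinfun_apply T x) \<and>
       blinfun_apply A y \<in> bj_minus (blinfun_apply T y)"
    using x y by blast
next
  assume "\<exists>x\<in>norm_attain T. \<exists>y\<in>norm_attain T.
       blinfun_apply A x \<in> bj_plus (blinfun_apply T x) \<and>
       blinfun_apply A y \<in> bj_minus (blinfun_apply T y)"
  then obtain x y where x: "x \<in> norm_attain T" "A x \<in> bj_plus (T x)"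
    and y: "y \<in> norm_attain T" "A y \<in> bj_minus (T y)" by blast
  show "bj_orth T A"
    unfolding bj_orth_def
  proof
    fix t :: real
    have bnd: "norm ((T + t *\<^sub>R A) z) \<le> norm (T + t *\<^sub>R A)" if "z \<in> norm_attain T" for z
      using norm_blinfun[of "T + t *\<^sub>R A" z] that by (simp add: norm_attain_def)
    show "norm T \<le> norm (T + t *\<^sub>R A)"
    proof (cases "t \<ge> 0")
      case True
      then have "norm (T x) \<le> norm (T x + t *\<^sub>R A x)" using x(2) by (simp add: bj_plus_def)
      then show ?thesis using bnd[OF x(1)] x(1)
        by (simp add: norm_attain_def blinfun.add_left blinfun.scaleR_left)
    next
      case False
      then have "norm (T y) \<le> norm (T y + t *\<^sub>R A y)" using y(2) by (simp add: bj_minus_def)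
      then show ?thesis using bnd[OF y(1)] y(1)
        by (simp add: norm_attain_def blinfun.add_left blinfun.scaleR_left)
    qed
  qed
qed

end
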